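(* Let $X$ be an $n$-dimensional projective space over a field, let $K$ be a $k$-dimensional subspace of $X$ with $-1\le k\le n-3$, let $\mathcal B_{-1}$ be a $(2,1)$-blocking set in $X/K$, and let $H$ be an arbitrary hyperplane of $X$ containing $K$. Then the disjoint union $$\mathcal B=\{T\in\mathrm{Gr}_1(X):\langle K,T\rangle\in\mathcal B_{-1}\}\ \cup\ \{T\in\mathrm{Gr}_1(H): K\cap T\neq\emptyset\}$$ is a $(2,1)$-blocking set in $X$.
   Context: Projective dimension is used (the empty subspace has dimension $-1$); $\mathrm{Gr}_d(Y)$ is the set of $d$-dimensional subspaces of $Y$. For a $k$-dimensional subspace $K$ of $X$, the quotient space $X/K$ is the projective space of dimension $\dim X-k-1$ whose $r$-dimensional subspaces are the $(r+k+1)$-dimensional subspaces of $X$ containing $K$; the span $\langle K,T\rangle$ is regarded as a subspace of $X/K$. A $(2,1)$-blocking set in a projective space $Y$ is a set of lines of $Y$ such that every plane of $Y$ contains at least one of them (in $X/K$: a set of $(k+2)$-subspaces of $X$ containing $K$ such that every $(k+3)$-subspace of $X$ containing $K$ contains one of them). *)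

theory Defs
  imports "HOL-Analysis.Analysis"
begin

text \<open>The projective space X of dimension n over a field 'a is modelled as the lattice
of linear subspaces of the vector space 'a^'n, with n = CARD('n) - 1.
A projective subspace of projective dimension d is a linear subspace of vector
dimension d + 1 (the empty projective subspace is the zero subspace, dimension -1).\<close>

definition pdim :: "('a::field ^ 'n) set \<Rightarrow> int" where
  "pdim U = int (vec.dim U) - 1"

definition Gr :: "int \<Rightarrow> ('a::field ^ 'n) set \<Rightarrow> ('a ^ 'n) set set" where
  "Gr d Y = {U. vec.subspace U \<and> U \<subseteq> Y \<and> pdim U = d}"

definition blocking21 :: "('a::field ^ 'n) set \<Rightarrow> ('a ^ 'n) set set \<Rightarrow> bool" where
  "blocking21 Y B \<longleftrightarrow> B \<subseteq> Gr 1 Y \<and> (\<forall>P \<in> Gr 2 Y. \<exists>L \<in> B. L \<subseteq> P)"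

text \<open>A (2,1)-blocking set in the quotient space X/K: a set of (k+2)-subspaces of X
containing K such that every (k+3)-subspace of X containing K contains one of them,
where k = pdim K.\<close>
definition blocking21_quot :: "('a::field ^ 'n) set \<Rightarrow> ('a ^ 'n) set set \<Rightarrow> bool" where
  "blocking21_quot K B \<longleftrightarrow>
     B \<subseteq> {L \<in> Gr (pdim K + 2) UNIV. K \<subseteq> L} \<and>
     (\<forall>P \<in> Gr (pdim K + 3) UNIV. K \<subseteq> P \<longrightarrow> (\<exists>L \<in> B. L \<subseteq> P))"

end

theory Submission
  imports Defs
begin

lemma dimUNIV: "vec.dim (UNIV :: ('a::field ^ 'n) set) = CARD('n)"
  by (simp add: card_cart_basis)

lemma plane_lemma:
  fixes K H P :: "('a::field ^ 'n) set"
  assumes sK: "vec.subspace K" and sH: "vec.subspace H" and sP: "vec.subspace P"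
    and dH: "vec.dim H + 1 = CARD('n)" and KH: "K \<subseteq> H" and dP: "vec.dim P = 3"
    and B0: "blocking21_quot K B0"
  shows "\<exists>T. vec.subspace T \<and> vec.dim T = 2 \<and> T \<subseteq> P \<and>
           (vec.span (K \<union> T) \<in> B0 \<or> (T \<subseteq> H \<and> K \<inter> T \<noteq> {0}))"
proof (cases "\<exists>v. v \<noteq> 0 \<and> v \<in> K \<inter> P")
  case True
  then obtain v where v: "v \<noteq> 0" "v \<in> K" "v \<in> P" by blast
  have sPH: "vec.subspace (P \<inter> H)" using sP sH by (rule vec.subspace_inter)
  have "vec.dim {x + y |x y. x \<in> P \<and> y \<in> H} + vec.dim (P \<inter> H) = vec.dim P + vec.dim H"
    using vec.dim_sums_Int[OF sP sH] .
  moreover have "vec.dim {x + y |x y. x \<in> P \<and> y \<in> H} \<le> CARD('n)"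
    proof -
    have "vec.dim {x + y |x y. x \<in> P \<and> y \<in> H} \<le> vec.dim (UNIV :: ('a ^ 'n) set)"
      by (rule vec.dim_subset) (rule subset_UNIV)
    then show ?thesis by (simp only: dimUNIV)
  qed
  ultimately have dPH: "vec.dim (P \<inter> H) \<ge> 2" using dP dH by linarith
  have "\<not> (P \<inter> H \<subseteq> vec.span {v})"
  proof
    assume "P \<inter> H \<subseteq> vec.span {v}"
    then have "vec.dim (P \<inter> H) \<le> vec.dim {v}" by (rule vec.dim_mono)
    then show False using dPH v(1) by simp
  qed
  then obtain w where w: "w \<in> P" "w \<in> H" "w \<notin> vec.span {v}" by blast
  define T where "T = vec.span {w, v}"
  have dT: "vec.dim T = 2"
    proof -
    have "vec.dim (insert w {v}) = (if w \<in> vec.span {v} then vec.dim {v} else vec.dim {v} + 1)"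
      by (rule vec.dim_insert)
    also have "\<dots> = vec.dim {v} + 1" by (rule if_not_P[OF w(3)])
    also have "vec.dim {v} = 1" using v(1) by (simp only: vec.dim_singleton if_False)
    finally have "vec.dim (insert w {v}) = 2" by simp
    then show "vec.dim T = 2" by (simp only: T_def vec.dim_span)
  qed
  have vH: "v \<in> H" using v KH by blast
  have TPH: "T \<subseteq> P \<inter> H" unfolding T_def
    using w v vH by (intro vec.span_minimal[OF _ sPH]) auto
  have vT: "v \<in> T" unfolding T_def by (simp add: vec.span_base)
  have "K \<inter> T \<noteq> {0}" using v vT by blast
  then show ?thesis using dT TPH vec.subspace_span[of "{w, v}"] unfolding T_def[symmetric] by blast
next
  case False
  then have KP0: "K \<inter> P \<subseteq> {0}" by blast
  define S where "S = {x + y |x y. x \<in> K \<and> y \<in> P}"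
  have sS: "vec.subspace S" unfolding S_def using vec.subspace_sums[OF sK sP] .
  have "vec.dim S + vec.dim (K \<inter> P) = vec.dim K + vec.dim P"
    unfolding S_def by (rule vec.dim_sums_Int[OF sK sP])
  moreover have "vec.dim (K \<inter> P) = 0" using KP0 by simp
  ultimately have dS: "vec.dim S = vec.dim K + 3" using dP by simp
  have KS: "K \<subseteq> S"
  proof
    fix x assume "x \<in> K"
    then have "x = x + 0 \<and> x \<in> K \<and> (0::'a^'n) \<in> P" using vec.subspace_0[OF sP] by simp
    then show "x \<in> S" unfolding S_def by blast
  qed
  have PS: "P \<subseteq> S"
  proof
    fix x assume "x \<in> P"
    then have "x = 0 + x \<and> (0::'a^'n) \<in> K \<and> x \<in> P" using vec.subspace_0[OF sK] by simp
    then show "x \<in> S" unfolding S_def by blast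
  qed
  have "S \<in> Gr (pdim K + 3) UNIV" using sS dS by (simp add: Gr_def pdim_def)
  then obtain L where L: "L \<in> B0" "L \<subseteq> S" using B0 KS unfolding blocking21_quot_def by blast
  then have "L \<in> Gr (pdim K + 2) UNIV" "K \<subseteq> L" using B0 unfolding blocking21_quot_def by auto
  then have sL: "vec.subspace L" and dL: "vec.dim L = vec.dim K + 2" and KL: "K \<subseteq> L"
    by (auto simp: Gr_def pdim_def)
  define T where "T = L \<inter> P"
  have sT: "vec.subspace T" unfolding T_def using sL sP by (rule vec.subspace_inter)
  have e1: "vec.dim {x + y |x y. x \<in> L \<and> y \<in> P} + vec.dim T = vec.dim L + vec.dim P"
    unfolding T_def by (rule vec.dim_sums_Int[OF sL sP])
  have "{x + y |x y. x \<in> L \<and> y \<in> P} \<subseteq> S"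
  proof
    fix z assume "z \<in> {x + y |x y. x \<in> L \<and> y \<in> P}"
    then obtain x y where "z = x + y" "x \<in> L" "y \<in> P" by blast
    then show "z \<in> S" using L(2) PS vec.subspace_add[OF sS] by blast
  qed
  then have "vec.dim {x + y |x y. x \<in> L \<and> y \<in> P} \<le> vec.dim S" by (rule vec.dim_subset)
  with e1 dS dL dP have dT1: "vec.dim T \<ge> 2" by linarith
  have e2: "vec.dim {x + y |x y. x \<in> K \<and> y \<in> T} + vec.dim (K \<inter> T) = vec.dim K + vec.dim T"
    by (rule vec.dim_sums_Int[OF sK sT])
  have "K \<inter> T \<subseteq> {0}" using KP0 unfolding T_def by blast
  then have "vec.dim (K \<inter> T) = 0" by simp
  have KTL: "{x + y |x y. x \<in> K \<and> y \<in> T} \<subseteq> L"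
  proof
    fix z assume "z \<in> {x + y |x y. x \<in> K \<and> y \<in> T}"
    then obtain x y where "z = x + y" "x \<in> K" "y \<in> T" by blast
    then show "z \<in> L" using KL vec.subspace_add[OF sL] unfolding T_def by blast
  qed
  then have "vec.dim {x + y |x y. x \<in> K \<and> y \<in> T} \<le> vec.dim L" by (rule vec.dim_subset)
  with e2 \<open>vec.dim (K \<inter> T) = 0\<close> dL dT1 have dT: "vec.dim T = 2"
    and dKT: "vec.dim {x + y |x y. x \<in> K \<and> y \<in> T} \<ge> vec.dim L" by linarith+
  have spKT: "vec.span (K \<union> T) = {x + y |x y. x \<in> K \<and> y \<in> T}"
    proof -
    have spK: "vec.span K = K" using sK by (rule vec.span_eq_iff[THEN iffD2])
    have spT: "vec.span T = T" using sT by (rule vec.span_eq_iff[THEN iffD2])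
    show ?thesis unfolding vec.span_Un[of K T] spK spT ..
  qed
  have "vec.subspace {x + y |x y. x \<in> K \<and> y \<in> T}" by (rule vec.subspace_sums[OF sK sT])
  then have "{x + y |x y. x \<in> K \<and> y \<in> T} = L"
    using vec.subspace_dim_equal[OF _ sL KTL dKT] by blast
  then have "vec.span (K \<union> T) \<in> B0" using spKT L(1) by simp
  then show ?thesis using sT dT unfolding T_def by auto
qed

theorem proposition3p13:
  fixes K H :: "('a::field ^ 'n) set"
    and B0 :: "('a ^ 'n) set set"
    and n k :: int
  assumes n_def: "n = int CARD('n) - 1"
    and K_sub: "K \<in> Gr k UNIV"
    and k_bounds: "-1 \<le> k" "k \<le> n - 3"
    and B0_blocking: "blocking21_quot K B0"
    and H_hyp: "H \<in> Gr (n - 1) UNIV"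
    and K_in_H: "K \<subseteq> H"
  shows "blocking21 UNIV
           ({T \<in> Gr 1 UNIV. vec.span (K \<union> T) \<in> B0}
            \<union> {T \<in> Gr 1 H. K \<inter> T \<noteq> {0}})"
proof -
  have sK: "vec.subspace K" using K_sub by (simp add: Gr_def)
  have sH: "vec.subspace H" and dH: "vec.dim H + 1 = CARD('n)"
    using H_hyp n_def by (auto simp: Gr_def pdim_def)
  show ?thesis unfolding blocking21_def
  proof (intro conjI ballI)
    show "{T \<in> Gr 1 UNIV. vec.span (K \<union> T) \<in> B0} \<union> {T \<in> Gr 1 H. K \<inter> T \<noteq> {0}} \<subseteq> Gr 1 UNIV"
      by (auto simp: Gr_def)
  next
    fix P assume "P \<in> Gr 2 (UNIV :: ('a ^ 'n) set)"
    then have sP: "vec.subspace P" and dP: "vec.dim P = 3" by (auto simp: Gr_def pdim_def)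
    obtain T where T: "vec.subspace T" "vec.dim T = 2" "T \<subseteq> P"
      "vec.span (K \<union> T) \<in> B0 \<or> (T \<subseteq> H \<and> K \<inter> T \<noteq> {0})"
      using plane_lemma[OF sK sH sP dH K_in_H dP B0_blocking] by blast
    then show "\<exists>L\<in>{T \<in> Gr 1 UNIV. vec.span (K \<union> T) \<in> B0} \<union> {T \<in> Gr 1 H. K \<inter> T \<noteq> {0}}. L \<subseteq> P"
      by (intro bexI[of _ T]) (auto simp: Gr_def pdim_def)
  qed
qed

end
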